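(* Let $a,b>0$ with $a\neq2b$, $\eta\in(0,1]$, $T>0$ and $0<\tau\le T$. Let $d_T(t)=\frac1T\Theta(t)\Theta(T-t)$ be the density of a dark count uniformly distributed in the detection time window $[0,T]$, and define the coincidence probability of a photon detection and a dark count $$p_{\mathrm{ph\text{-}dc}}(T,\tau)=\iint_{|t_1-t_2|\le\tau}p_T(t_1)\,d_T(t_2)\,dt_1\,dt_2 .$$ Then $$p_{\mathrm{ph\text{-}dc}}(T,\tau)\frac{p_{\mathrm{det}}(T)}{\eta}=\frac{a}{2b(a-2b)T}\Big[1+2b\tau-e^{-2b\tau}+e^{-2bT}\big(1-2b\tau-e^{2b\tau}\big)\Big]-\frac{2b}{a(a-2b)T}\Big[1+a\tau-e^{-a\tau}+e^{-aT}\big(1-a\tau-e^{a\tau}\big)\Big].$$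
   Context: $\Theta$ is the Heaviside step function. The double-exponential photon state $(a,b)$ is the mixture over emission times $t_0$ with density $p_{\mathrm{em}}(t_0)=ae^{-at_0}\Theta(t_0)$ of pure photons with temporal wave function $\psi_{t_0}(t)=\sqrt{2b}\,e^{-b(t-t_0)}\Theta(t-t_0)$. For a detector of efficiency $\eta$, the detection-time density is $p(t)=\eta\int_0^\infty p_{\mathrm{em}}(t_0)|\psi_{t_0}(t)|^2dt_0$, $p_{\mathrm{det}}(T)=\int_0^Tp(t)\,dt$, and $p_T(t)=\Theta(t)\Theta(T-t)p(t)/p_{\mathrm{det}}(T)$ is the detection-time density conditioned on detection within $[0,T]$. *)

theory Defs
  imports "HOL-Analysis.Analysis"
begin

text \<open>Heaviside step function (the value at 0 is irrelevant for all integrals below).\<close>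
definition heaviside :: "real \<Rightarrow> real" where
  "heaviside x = (if 0 \<le> x then 1 else 0)"

text \<open>Emission-time density of the double-exponential photon state (a,b).\<close>
definition p_em :: "real \<Rightarrow> real \<Rightarrow> real" where
  "p_em a t0 = a * exp (- a * t0) * heaviside t0"

text \<open>Temporal wave function of the pure photon emitted at time t0.\<close>
definition psi :: "real \<Rightarrow> real \<Rightarrow> real \<Rightarrow> real" where
  "psi b t0 t = sqrt (2 * b) * exp (- b * (t - t0)) * heaviside (t - t0)"

definition p_dens :: "real \<Rightarrow> real \<Rightarrow> real \<Rightarrow> real \<Rightarrow> real" where
  "p_dens a b \<eta> t = \<eta> * (LINT t0:{0..}|lborel. p_em a t0 * (psi b t0 t)\<^sup>2)"

definition p_det :: "real \<Rightarrow> real \<Rightarrow> real \<Rightarrow> real \<Rightarrow> real" where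
  "p_det a b \<eta> T = (LINT t:{0..T}|lborel. p_dens a b \<eta> t)"

definition p_cond :: "real \<Rightarrow> real \<Rightarrow> real \<Rightarrow> real \<Rightarrow> real \<Rightarrow> real" where
  "p_cond a b \<eta> T t = heaviside t * heaviside (T - t) * p_dens a b \<eta> t / p_det a b \<eta> T"

definition d_dens :: "real \<Rightarrow> real \<Rightarrow> real" where
  "d_dens T t = (1 / T) * heaviside t * heaviside (T - t)"

definition p_phdc :: "real \<Rightarrow> real \<Rightarrow> real \<Rightarrow> real \<Rightarrow> real \<Rightarrow> real" where
  "p_phdc a b \<eta> T \<tau> =
     (LINT z:{(t1, t2). \<bar>t1 - t2\<bar> \<le> \<tau>}|(lborel \<Otimes>\<^sub>M lborel).
        p_cond a b \<eta> T (fst z) * d_dens T (snd z))"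

end

theory Submission
  imports Defs
begin

lemma ftc:
  fixes F f :: "real \<Rightarrow> real"
  assumes "a \<le> b" "\<And>x. a \<le> x \<Longrightarrow> x \<le> b \<Longrightarrow> (F has_real_derivative f x) (at x)"
  shows "(f has_integral (F b - F a)) {a..b}"
  apply (rule fundamental_theorem_of_calculus[OF assms(1)])
  using assms(2) by (auto simp: has_real_derivative_iff_has_vector_derivative[symmetric]
      intro: has_field_derivative_at_within)

lemma J_A:
  fixes c T \<tau> :: real assumes "c \<noteq> 0" "0 \<le> T"
  shows "((\<lambda>t. exp (-c*t) * (2*\<tau>)) has_integral (2*\<tau>*(1 - exp(-c*T))/c)) {0..T}"
proof -
  have "((\<lambda>t. exp (-c*t) * (2*\<tau>)) has_integral ((\<lambda>t. -2*\<tau>*exp(-c*t)/c) T - (\<lambda>t. -2*\<tau>*exp(-c*t)/c) 0)) {0..T}"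
    apply (rule ftc[OF assms(2)])
    using assms(1) by (auto intro!: derivative_eq_intros simp: field_simps)
  moreover have "(\<lambda>t. -2*\<tau>*exp(-c*t)/c) T - (\<lambda>t. -2*\<tau>*exp(-c*t)/c) 0 = 2*\<tau>*(1 - exp(-c*T))/c"
    using assms(1) by (simp add: field_simps)
  ultimately show ?thesis by metis
qed

lemma J_B:
  fixes c T \<tau> :: real assumes "c \<noteq> 0" "0 \<le> \<tau>" "\<tau> \<le> T"
  shows "((\<lambda>t. exp (-c*t) * max 0 (\<tau> - t)) has_integral
     (\<tau>/c - (1 - exp(-c*\<tau>))/c^2)) {0..T}"
proof -
  let ?F = "\<lambda>t. exp(-c*t) * (t/c + 1/c^2 - \<tau>/c)"
  have 1: "((\<lambda>t. exp (-c*t) * (\<tau> - t)) has_integral (?F \<tau> - ?F 0)) {0..\<tau>}"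
    apply (rule ftc[OF assms(2)])
    using assms(1) by (auto intro!: derivative_eq_intros simp: field_simps power2_eq_square)
  have 1: "((\<lambda>t. exp (-c*t) * max 0 (\<tau> - t)) has_integral (?F \<tau> - ?F 0)) {0..\<tau>}"
    by (rule has_integral_eq[OF _ 1]) auto
  have 2: "((\<lambda>t. exp (-c*t) * max 0 (\<tau> - t)) has_integral 0) {\<tau>..T}"
    by (rule has_integral_eq[OF _ has_integral_0]) auto
  have "((\<lambda>t. exp (-c*t) * max 0 (\<tau> - t)) has_integral (?F \<tau> - ?F 0 + 0)) {0..T}"
    by (rule has_integral_combine[OF assms(2,3) 1 2])
  moreover have "?F \<tau> - ?F 0 + 0 = \<tau>/c - (1 - exp(-c*\<tau>))/c^2"
    using assms(1) by (simp add: field_simps power2_eq_square)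
  ultimately show ?thesis by metis
qed

lemma J_C:
  fixes c T \<tau> :: real assumes "c \<noteq> 0" "0 \<le> \<tau>" "\<tau> \<le> T"
  shows "((\<lambda>t. exp (-c*t) * max 0 (t + \<tau> - T)) has_integral
     (exp(-c*T) * (exp (c*\<tau>) - 1 - c*\<tau>)/c^2)) {0..T}"
proof -
  let ?F = "\<lambda>t. exp(-c*t) * (-t/c - 1/c^2 + (T-\<tau>)/c)"
  have 2: "((\<lambda>t. exp (-c*t) * (t + \<tau> - T)) has_integral (?F T - ?F (T-\<tau>))) {T-\<tau>..T}"
    apply (rule ftc)
    using assms by (auto intro!: derivative_eq_intros simp: field_simps power2_eq_square)
  have 2: "((\<lambda>t. exp (-c*t) * max 0 (t + \<tau> - T)) has_integral (?F T - ?F (T-\<tau>))) {T-\<tau>..T}"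
    by (rule has_integral_eq[OF _ 2]) auto
  have 1: "((\<lambda>t. exp (-c*t) * max 0 (t + \<tau> - T)) has_integral 0) {0..T-\<tau>}"
    by (rule has_integral_eq[OF _ has_integral_0]) auto
  have "((\<lambda>t. exp (-c*t) * max 0 (t + \<tau> - T)) has_integral (0 + (?F T - ?F (T-\<tau>)))) {0..T}"
    by (rule has_integral_combine[OF _ _ 1 2]) (use assms in auto)
  moreover have "0 + (?F T - ?F (T-\<tau>)) = exp(-c*T) * (exp (c*\<tau>) - 1 - c*\<tau>)/c^2"
    using assms(1) by (simp add: field_simps power2_eq_square exp_diff right_diff_distrib exp_minus)
  ultimately show ?thesis by metis
qed

lemma J_all:
  fixes c T \<tau> :: real assumes "c \<noteq> 0" "0 \<le> \<tau>" "\<tau> \<le> T"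
  shows "((\<lambda>t. exp (-c*t) * (min T (t+\<tau>) - max 0 (t-\<tau>))) has_integral
     (1 + c*\<tau> - exp (-c*\<tau>) + exp (-c*T) * (1 - c*\<tau> - exp (c*\<tau>))) / c^2) {0..T}"
proof -
  have h: "((\<lambda>t. exp (-c*t) * (2*\<tau>) - exp (-c*t) * max 0 (t + \<tau> - T) - exp (-c*t) * max 0 (\<tau> - t)) has_integral
     (2*\<tau>*(1 - exp(-c*T))/c - exp(-c*T) * (exp (c*\<tau>) - 1 - c*\<tau>)/c^2 - (\<tau>/c - (1 - exp(-c*\<tau>))/c^2))) {0..T}"
    by (intro has_integral_diff J_A J_B J_C) (use assms in auto)
  have e: "2*\<tau>*(1 - exp(-c*T))/c - exp(-c*T) * (exp (c*\<tau>) - 1 - c*\<tau>)/c^2 - (\<tau>/c - (1 - exp(-c*\<tau>))/c^2)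
     = (1 + c*\<tau> - exp (-c*\<tau>) + exp (-c*T) * (1 - c*\<tau> - exp (c*\<tau>))) / c^2"
    using assms(1) by (simp add: field_simps power2_eq_square)
  show ?thesis
    by (rule has_integral_eq[OF _ h[unfolded e]]) (auto simp: algebra_simps min_def max_def)
qed

lemma exp_aux: fixes a b t t0 :: real shows "exp(-a*t0) * (exp(-b*(t-t0)))^2 = exp(-2*b*t) * exp((2*b-a)*t0)"
proof -
  have "exp(-a*t0) * (exp(-b*(t-t0)))^2 = exp(-a*t0 + 2*(-b*(t-t0)))"
    by (simp add: power2_eq_square mult_exp_exp)
  also have "\<dots> = exp(-2*b*t + (2*b-a)*t0)" by (rule arg_cong[where f=exp]) (simp add: algebra_simps)
  also have "\<dots> = exp(-2*b*t) * exp((2*b-a)*t0)" by (rule exp_add)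
  finally show ?thesis .
qed

lemma p_dens_eq:
  assumes "a > 0" "b > 0" "a \<noteq> 2*b"
  shows "p_dens a b \<eta> t = (if 0 \<le> t then \<eta> * (2*a*b/(2*b-a)) * (exp(-a*t) - exp(-2*b*t)) else 0)"
proof (cases "0 \<le> t")
  case True
  let ?h = "\<lambda>t0. 2*a*b*exp(-2*b*t) * exp((2*b-a)*t0)"
  let ?H = "\<lambda>t0. 2*a*b*exp(-2*b*t) * exp((2*b-a)*t0) / (2*b-a)"
  have ne: "2*b - a \<noteq> 0" using assms by auto
  have "(LINT t0:{0..}|lborel. p_em a t0 * (psi b t0 t)\<^sup>2)
      = integral\<^sup>L lborel (\<lambda>t0. indicator {0..t} t0 *\<^sub>R ?h t0)"
    unfolding set_lebesgue_integral_def
  proof (rule Bochner_Integration.integral_cong[OF refl])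
    fix t0 :: real
    show "indicator {0..} t0 *\<^sub>R (p_em a t0 * (psi b t0 t)\<^sup>2) = indicator {0..t} t0 *\<^sub>R ?h t0"
    proof -
      have "(psi b t0 t)\<^sup>2 = 2*b * (exp(-b*(t-t0)))^2 * (heaviside (t-t0))^2"
        using assms unfolding psi_def by (simp add: power_mult_distrib)
      then show ?thesis
        using exp_aux[of a t0 b t]
        by (auto simp: indicator_def p_em_def heaviside_def algebra_simps)
    qed
  qed
  also have "\<dots> = ?H t - ?H 0"
    by (rule integral_FTC_atLeastAtMost[OF True])
      (use ne in \<open>auto intro!: derivative_eq_intros continuous_intros simp: has_real_derivative_iff_has_vector_derivative[symmetric]\<close>)
  also have "\<dots> = (2*a*b/(2*b-a)) * (exp(-a*t) - exp(-2*b*t))"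
  proof -
    have "exp(-2*b*t) * exp((2*b-a)*t) = exp(-a*t)"
      by (subst mult_exp_exp) (rule arg_cong[where f=exp], simp add: algebra_simps)
    then have "?H t = 2*a*b*exp(-a*t)/(2*b-a)" by (simp add: mult.assoc)
    moreover have "?H 0 = 2*a*b*exp(-2*b*t)/(2*b-a)" by simp
    ultimately show ?thesis using ne by (simp add: diff_divide_distrib right_diff_distrib)
  qed
  finally show ?thesis using True unfolding p_dens_def by simp
next
  case False
  have "(LINT t0:{0..}|lborel. p_em a t0 * (psi b t0 t)\<^sup>2) = 0"
    unfolding set_lebesgue_integral_def
  proof -
    have "(\<lambda>t0. indicator {0..} t0 *\<^sub>R (p_em a t0 * (psi b t0 t)\<^sup>2)) = (\<lambda>_. 0)"
      using False by (auto simp: indicator_def psi_def heaviside_def)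
    then show "integral\<^sup>L lborel (\<lambda>t0. indicator {0..} t0 *\<^sub>R (p_em a t0 * (psi b t0 t)\<^sup>2)) = 0" by simp
  qed
  then show ?thesis using False unfolding p_dens_def by simp
qed

definition fd :: "real \<Rightarrow> real \<Rightarrow> real \<Rightarrow> real" where
  "fd a b t = (2*a*b/(2*b-a)) * (exp(-a*t) - exp(-2*b*t))"

lemma fd_pos:
  assumes "a > 0" "b > 0" "a \<noteq> 2*b" "t > 0"
  shows "fd a b t > 0"
proof (cases "a < 2*b")
  case True
  then have "exp(-a*t) > exp(-2*b*t)" using assms by (simp add: mult_strict_right_mono)
  then show ?thesis using True assms unfolding fd_def by (simp add: mult_pos_pos)
next
  case False
  then have lt: "2*b < a" using assms by simp
  then have "exp(-a*t) < exp(-2*b*t)" using assms by (simp add: mult_strict_right_mono)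
  then show ?thesis using lt assms unfolding fd_def by (simp add: mult_pos_neg zero_less_mult_iff divide_neg_neg)
qed

lemma fd_nonneg:
  assumes "a > 0" "b > 0" "a \<noteq> 2*b" "t \<ge> 0"
  shows "fd a b t \<ge> 0"
  using fd_pos[OF assms(1-3), of t] assms(4) by (cases "t = 0") (auto simp: fd_def)

lemma fd_cont: "continuous_on S (fd a b)"
  unfolding fd_def by (intro continuous_intros)

lemma p_dens_fd:
  assumes "a > 0" "b > 0" "a \<noteq> 2*b"
  shows "p_dens a b \<eta> t = (if 0 \<le> t then \<eta> * fd a b t else 0)"
  using p_dens_eq[OF assms] by (simp add: fd_def)

lemma p_det_eq:
  assumes "a > 0" "b > 0" "a \<noteq> 2*b"
  shows "p_det a b \<eta> T = integral {0..T} (\<lambda>t. \<eta> * fd a b t)"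
proof -
  have "p_det a b \<eta> T = (LINT t:{0..T}|lborel. \<eta> * fd a b t)"
    unfolding p_det_def
    by (rule set_lebesgue_integral_cong) (auto simp: p_dens_fd[OF assms])
  also have "\<dots> = integral {0..T} (\<lambda>t. \<eta> * fd a b t)"
    by (rule set_borel_integral_eq_integral(2)) (unfold set_integrable_def,
        rule borel_integrable_compact, auto intro!: continuous_intros fd_cont[THEN continuous_on_subset])
  finally show ?thesis .
qed

lemma int_fd_pos:
  assumes "a > 0" "b > 0" "a \<noteq> 2*b" "T > 0"
  shows "integral {0..T} (fd a b) > 0"
proof -
  have int: "fd a b integrable_on {0..T}"
    by (rule integrable_continuous_interval) (rule fd_cont)
  have ge: "integral {0..T} (fd a b) \<ge> 0"
    by (rule integral_nonneg[OF int]) (use fd_nonneg[OF assms(1-3)] in auto)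
  have "integral {0..T} (fd a b) \<noteq> 0"
  proof
    assume z: "integral {0..T} (fd a b) = 0"
    have "fd a b T = 0"
    proof (rule has_integral_0_cbox_imp_0[of 0 T "fd a b"])
      show "continuous_on (cbox 0 T) (fd a b)" by (rule fd_cont)
      show "\<And>x. x \<in> box 0 T \<Longrightarrow> 0 \<le> fd a b x" using fd_nonneg[OF assms(1-3)] by auto
      show "(fd a b has_integral 0) (cbox 0 T)" using int z
        by (metis cbox_interval has_integral_integral)
      show "box 0 T \<noteq> {}" using assms by auto
      show "T \<in> cbox 0 T" using assms by auto
    qed
    then show False using fd_pos[OF assms(1-3) assms(4)] by simp
  qed
  then show ?thesis using ge by simp
qed

lemma p_det_pos:
  assumes "a > 0" "b > 0" "a \<noteq> 2*b" "T > 0" "\<eta> > 0"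
  shows "p_det a b \<eta> T = \<eta> * integral {0..T} (fd a b)" "p_det a b \<eta> T > 0"
proof -
  show e: "p_det a b \<eta> T = \<eta> * integral {0..T} (fd a b)"
    using p_det_eq[OF assms(1-3)] by simp
  show "p_det a b \<eta> T > 0" unfolding e using int_fd_pos[OF assms(1-4)] assms(5) by simp
qed

lemma main_int:
  assumes "a > 0" "b > 0" "a \<noteq> 2*b" "T > 0" "0 < \<tau>" "\<tau> \<le> T"
  shows "integral\<^sup>L (lborel \<Otimes>\<^sub>M lborel)
     (\<lambda>z. indicator ({z. \<bar>fst z - snd z\<bar> \<le> \<tau>} \<inter> ({0..T} \<times> {0..T})) z *\<^sub>R fd a b (fst z))
   = integral {0..T} (\<lambda>t. fd a b t * (min T (t+\<tau>) - max 0 (t-\<tau>)))"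
proof -
  define K where "K = {z::real\<times>real. \<bar>fst z - snd z\<bar> \<le> \<tau>} \<inter> ({0..T} \<times> {0..T})"
  have cK: "compact K" unfolding K_def
    by (intro closed_Int_compact compact_Times compact_Icc closed_Collect_le continuous_intros)
  have int: "integrable (lborel \<Otimes>\<^sub>M lborel) (\<lambda>z. indicator K z *\<^sub>R fd a b (fst z))"
    unfolding lborel_prod
    by (rule borel_integrable_compact[OF cK]) (intro continuous_intros fd_cont[THEN continuous_on_compose2[of UNIV]], auto)
  have "integral\<^sup>L (lborel \<Otimes>\<^sub>M lborel) (\<lambda>z. indicator K z *\<^sub>R fd a b (fst z))
      = (\<integral>t1. (\<integral>t2. indicator K (t1,t2) *\<^sub>R fd a b (fst (t1,t2)) \<partial>lborel) \<partial>lborel)"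
    by (rule lborel_pair.integral_fst'[OF int, symmetric])
  also have "\<dots> = (\<integral>t1. indicator {0..T} t1 * (fd a b t1 * (min T (t1+\<tau>) - max 0 (t1-\<tau>))) \<partial>lborel)"
  proof (rule Bochner_Integration.integral_cong[OF refl])
    fix t1 :: real
    have "(\<lambda>t2. indicator K (t1,t2) *\<^sub>R fd a b (fst (t1,t2)))
        = (\<lambda>t2. (indicator {0..T} t1 * fd a b t1) * indicator {max 0 (t1-\<tau>)..min T (t1+\<tau>)} t2)"
      by (auto simp: K_def indicator_def abs_le_iff algebra_simps)
    then have "(\<integral>t2. indicator K (t1,t2) *\<^sub>R fd a b (fst (t1,t2)) \<partial>lborel)
        = (indicator {0..T} t1 * fd a b t1) * measure lborel {max 0 (t1-\<tau>)..min T (t1+\<tau>)}"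
      by simp
    also have "\<dots> = indicator {0..T} t1 * (fd a b t1 * (min T (t1+\<tau>) - max 0 (t1-\<tau>)))"
    proof (cases "t1 \<in> {0..T}")
      case True
      then have "max 0 (t1-\<tau>) \<le> min T (t1+\<tau>)" using assms by auto
      then show ?thesis using True by simp
    qed simp
    finally show "(\<integral>t2. indicator K (t1,t2) *\<^sub>R fd a b (fst (t1,t2)) \<partial>lborel)
        = indicator {0..T} t1 * (fd a b t1 * (min T (t1+\<tau>) - max 0 (t1-\<tau>)))" .
  qed
  also have "\<dots> = (LINT t:{0..T}|lborel. fd a b t * (min T (t+\<tau>) - max 0 (t-\<tau>)))"
    by (simp add: set_lebesgue_integral_def)
  also have "\<dots> = integral {0..T} (\<lambda>t. fd a b t * (min T (t+\<tau>) - max 0 (t-\<tau>)))"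
    by (rule set_borel_integral_eq_integral(2)) (unfold set_integrable_def,
        rule borel_integrable_compact, auto intro!: continuous_intros fd_cont[THEN continuous_on_subset])
  finally show ?thesis unfolding K_def .
qed

lemma fdL_int:
  assumes "a > 0" "b > 0" "a \<noteq> 2*b" "0 < \<tau>" "\<tau> \<le> T"
  shows "integral {0..T} (\<lambda>t. fd a b t * (min T (t+\<tau>) - max 0 (t-\<tau>)))
   = (2*a*b/(2*b-a)) * ((1 + a*\<tau> - exp (-a*\<tau>) + exp (-a*T) * (1 - a*\<tau> - exp (a*\<tau>))) / a^2
       - (1 + (2*b)*\<tau> - exp (-(2*b)*\<tau>) + exp (-(2*b)*T) * (1 - (2*b)*\<tau> - exp ((2*b)*\<tau>))) / (2*b)^2)"
proof -
  have h: "((\<lambda>t. (2*a*b/(2*b-a)) * (exp (-a*t) * (min T (t+\<tau>) - max 0 (t-\<tau>)) - exp (-(2*b)*t) * (min T (t+\<tau>) - max 0 (t-\<tau>)))) has_integral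
     (2*a*b/(2*b-a)) * ((1 + a*\<tau> - exp (-a*\<tau>) + exp (-a*T) * (1 - a*\<tau> - exp (a*\<tau>))) / a^2
       - (1 + (2*b)*\<tau> - exp (-(2*b)*\<tau>) + exp (-(2*b)*T) * (1 - (2*b)*\<tau> - exp ((2*b)*\<tau>))) / (2*b)^2)) {0..T}"
    by (intro has_integral_mult_right has_integral_diff J_all) (use assms in auto)
  show ?thesis
    by (rule integral_unique, rule has_integral_eq[OF _ h]) (use assms in \<open>simp add: fd_def field_simps\<close>)
qed

lemma alg_gen: fixes a b D T Ga G2 :: real assumes "D \<noteq> 0" "T \<noteq> 0" "a \<noteq> 0" "b \<noteq> 0"
  shows "(2*a*b/(-D)) * (Ga / a^2 - G2 / (2*b)^2) / T
     = a / (2 * b * D * T) * G2 - 2 * b / (a * D * T) * Ga"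
  using assms by (simp add: field_simps power2_eq_square)

theorem theorem8:
  fixes a b \<eta> T \<tau> :: real
  assumes "a > 0" and "b > 0" and "a \<noteq> 2 * b"
    and "0 < \<eta>" and "\<eta> \<le> 1"
    and "T > 0" and "0 < \<tau>" and "\<tau> \<le> T"
  shows "p_phdc a b \<eta> T \<tau> * (p_det a b \<eta> T / \<eta>) =
     a / (2 * b * (a - 2 * b) * T) *
       (1 + 2 * b * \<tau> - exp (- 2 * b * \<tau>)
          + exp (- 2 * b * T) * (1 - 2 * b * \<tau> - exp (2 * b * \<tau>)))
   - 2 * b / (a * (a - 2 * b) * T) *
       (1 + a * \<tau> - exp (- a * \<tau>)
          + exp (- a * T) * (1 - a * \<tau> - exp (a * \<tau>)))"
proof -
  define P where "P = p_det a b \<eta> T"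
  have Ppos: "P > 0" unfolding P_def using p_det_pos(2) assms by auto
  define W where "W = integral {0..T} (\<lambda>t. fd a b t * (min T (t+\<tau>) - max 0 (t-\<tau>)))"
  have "p_phdc a b \<eta> T \<tau> = integral\<^sup>L (lborel \<Otimes>\<^sub>M lborel)
     (\<lambda>z. \<eta> / (P * T) * (indicator ({z. \<bar>fst z - snd z\<bar> \<le> \<tau>} \<inter> ({0..T} \<times> {0..T})) z *\<^sub>R fd a b (fst z)))"
    unfolding p_phdc_def set_lebesgue_integral_def
  proof (rule Bochner_Integration.integral_cong[OF refl])
    fix z :: "real \<times> real"
    obtain t1 t2 where z: "z = (t1,t2)" by (cases z)
    show "indicator {(t1, t2). \<bar>t1 - t2\<bar> \<le> \<tau>} z *\<^sub>R (p_cond a b \<eta> T (fst z) * d_dens T (snd z)) =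
      \<eta> / (P * T) * (indicator ({z. \<bar>fst z - snd z\<bar> \<le> \<tau>} \<inter> ({0..T} \<times> {0..T})) z *\<^sub>R fd a b (fst z))"
      unfolding z using assms
      by (auto simp: indicator_def heaviside_def p_cond_def d_dens_def p_dens_fd P_def)
  qed
  also have "\<dots> = \<eta> / (P * T) * W"
    unfolding integral_mult_right_zero W_def by (subst main_int) (use assms in auto)
  finally have ph: "p_phdc a b \<eta> T \<tau> = \<eta> / (P * T) * W" .
  have W: "W = (2*a*b/(2*b-a)) * ((1 + a*\<tau> - exp (-a*\<tau>) + exp (-a*T) * (1 - a*\<tau> - exp (a*\<tau>))) / a^2
       - (1 + (2*b)*\<tau> - exp (-(2*b)*\<tau>) + exp (-(2*b)*T) * (1 - (2*b)*\<tau> - exp ((2*b)*\<tau>))) / (2*b)^2)"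
    unfolding W_def by (rule fdL_int) (use assms in auto)
  have ne: "a - 2*b \<noteq> 0" "2*b - a \<noteq> 0" using assms by auto
  have step1: "p_phdc a b \<eta> T \<tau> * (p_det a b \<eta> T / \<eta>) = W / T"
    unfolding ph P_def[symmetric] using Ppos assms by (simp add: field_simps)
  have m: "2*b - a = -(a - 2*b)" by simp
  have alg: "(2*a*b/(2*b-a)) * (Ga / a^2 - G2 / (2*b)^2) / T
     = a / (2 * b * (a - 2 * b) * T) * G2 - 2 * b / (a * (a - 2 * b) * T) * Ga" for Ga G2 :: real
    unfolding m by (rule alg_gen[OF ne(1)]) (use assms in auto)
  show ?thesis
    unfolding step1 W alg by simp
qed

end
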